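(* Let $\rho:\mathcal{X}\to\mathbb{R}$ be a monetary risk measure and let $P\in\mathcal{M}_1$. Then $\rho^P$ is a monetary risk measure on $L^\infty(P)$, where its defining properties are understood $P$-almost surely: (i) if $X\ge 0$ $P$-a.s. then $\rho^P(X)\le 0$; (ii) if $X\ge Y$ $P$-a.s. then $\rho^P(X)\le\rho^P(Y)$; (iii) $\rho^P(X+a)=\rho^P(X)-a$ for all $a\in\mathbb{R}$, for all $X,Y\in L^\infty(P)$. If moreover $\rho$ is a convex risk measure, then $\rho^P$ is convex, i.e. $\rho^P(\lambda X+(1-\lambda)Y)\le\lambda\rho^P(X)+(1-\lambda)\rho^P(Y)$ for all $X,Y\in L^\infty(P)$ and $\lambda\in(0,1)$.
   Context: $(\Omega,\mathcal{F})$ is a measurable space, $\mathcal{M}_1$ the set of probability measures on it, and $\mathcal{X}$ the space of all $\mathcal{F}$-measurable $X:\Omega\to\mathbb{R}$ with $\sup_{\omega}|X(\omega)|<\infty$. A monetary risk measure is a map $\rho:\mathcal{X}\to\mathbb{R}$ such that, pointwise for all $\omega$: $X\ge0\Rightarrow\rho(X)\le0$; $X\ge Y\Rightarrow\rho(X)\le\rho(Y)$; $\rho(X+a)=\rho(X)-a$ for all $a\in\mathbb{R}$. It is a convex risk measure if in addition $\rho(\lambda X+(1-\lambda)Y)\le\lambda\rho(X)+(1-\lambda)\rho(Y)$ for all $X,Y\in\mathcal{X}$, $\lambda\in(0,1)$. For $P\in\mathcal{M}_1$ and $X\in L^\infty(P)=L^\infty(\Omega,\mathcal{F},P)$ define $\rho^P(X)=\inf\{\rho(\widetilde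 X):\widetilde X\in\mathcal{X},\ P(\widetilde X=X)=1\}$.
   Formalization: $\rho^P$ is an infimum taken in the extended reals, possibly -infinity, so it is not asserted to map into $\mathbb{R}$, and (i)-(iii) and convexity are statements about extended reals. The statement above fails without it. *)

theory Defs
  imports "HOL-Probability.Probability"
begin

definition bdd_meas :: "'a measure \<Rightarrow> ('a \<Rightarrow> real) set" where
  "bdd_meas M = {X. X \<in> borel_measurable M \<and> (\<exists>C. \<forall>\<omega>\<in>space M. \<bar>X \<omega>\<bar> \<le> C)}"

definition monetary_rm :: "'a measure \<Rightarrow> (('a \<Rightarrow> real) \<Rightarrow> real) \<Rightarrow> bool" where
  "monetary_rm M \<rho> \<longleftrightarrow>
     (\<forall>X\<in>bdd_meas M. (\<forall>\<omega>\<in>space M. 0 \<le> X \<omega>) \<longrightarrow> \<rho> X \<le> 0) \<and>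
     (\<forall>X\<in>bdd_meas M. \<forall>Y\<in>bdd_meas M. (\<forall>\<omega>\<in>space M. Y \<omega> \<le> X \<omega>) \<longrightarrow> \<rho> X \<le> \<rho> Y) \<and>
     (\<forall>X\<in>bdd_meas M. \<forall>a::real. \<rho> (\<lambda>\<omega>. X \<omega> + a) = \<rho> X - a)"

definition convex_rm :: "'a measure \<Rightarrow> (('a \<Rightarrow> real) \<Rightarrow> real) \<Rightarrow> bool" where
  "convex_rm M \<rho> \<longleftrightarrow> monetary_rm M \<rho> \<and>
     (\<forall>X\<in>bdd_meas M. \<forall>Y\<in>bdd_meas M. \<forall>l::real. 0 < l \<and> l < 1 \<longrightarrow>
        \<rho> (\<lambda>\<omega>. l * X \<omega> + (1 - l) * Y \<omega>) \<le> l * \<rho> X + (1 - l) * \<rho> Y)"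

text \<open>Representatives of elements of L-infinity(P): measurable, P-essentially bounded.\<close>
definition Linf :: "'a measure \<Rightarrow> ('a \<Rightarrow> real) set" where
  "Linf P = {X. X \<in> borel_measurable P \<and> (\<exists>C. AE \<omega> in P. \<bar>X \<omega>\<bar> \<le> C)}"

text \<open>rho^P(X) = inf { rho(X') : X' bounded measurable, X' = X P-a.s. }, taken in the
  extended reals (the infimum may be -infinity).\<close>
definition rhoP :: "'a measure \<Rightarrow> (('a \<Rightarrow> real) \<Rightarrow> real) \<Rightarrow> 'a measure \<Rightarrow> ('a \<Rightarrow> real) \<Rightarrow> ereal" where
  "rhoP M \<rho> P X = (INF X'\<in>{X'\<in>bdd_meas M. AE \<omega> in P. X' \<omega> = X \<omega>}. ereal (\<rho> X'))"

end

theory Submission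
  imports Defs
begin

lemma conv_aux:
  fixes f g :: "'b \<Rightarrow> real" and z :: ereal
  assumes A: "A \<noteq> {}" and B: "B \<noteq> {}" and l: "0 < l" and m: "0 < m"
    and H: "\<And>x y. x \<in> A \<Longrightarrow> y \<in> B \<Longrightarrow> z \<le> ereal (l * f x + m * g y)"
  shows "z \<le> ereal l * (INF x\<in>A. ereal (f x)) + ereal m * (INF y\<in>B. ereal (g y))"
proof (cases z)
  case MInf then show ?thesis by simp
next
  case PInf
  from A B obtain x y where "x \<in> A" "y \<in> B" by blast
  with H[of x y] PInf show ?thesis by simp
next
  case (real r)
  from A obtain x0 where x0: "x0 \<in> A" by blast
  from B obtain y0 where y0: "y0 \<in> B" by blast
  have F1: "ereal ((r - m * g y) / l) \<le> (INF x\<in>A. ereal (f x))" if "y \<in> B" for y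
  proof (rule INF_greatest)
    fix x assume "x \<in> A"
    with H[of x y] that real have "r \<le> l * f x + m * g y" by simp
    then have "(r - m * g y) / l \<le> f x" using l by (simp add: field_simps)
    then show "ereal ((r - m * g y) / l) \<le> ereal (f x)" by simp
  qed
  have "(INF x\<in>A. ereal (f x)) \<le> ereal (f x0)" using x0 by (rule INF_lower)
  moreover have "(INF x\<in>A. ereal (f x)) \<noteq> -\<infinity>" using F1[OF y0] by auto
  ultimately obtain F where F: "(INF x\<in>A. ereal (f x)) = ereal F" by (cases "(INF x\<in>A. ereal (f x))") auto
  have G1: "ereal ((r - l * F) / m) \<le> (INF y\<in>B. ereal (g y))"
  proof (rule INF_greatest)
    fix y assume "y \<in> B"
    from F1[OF this] F have "(r - m * g y) / l \<le> F" by simp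
    then have "r - m * g y \<le> l * F" using l by (simp add: field_simps)
    then have "(r - l * F) / m \<le> g y" using m by (simp add: field_simps)
    then show "ereal ((r - l * F) / m) \<le> ereal (g y)" by simp
  qed
  have "(INF y\<in>B. ereal (g y)) \<le> ereal (g y0)" using y0 by (rule INF_lower)
  moreover have "(INF y\<in>B. ereal (g y)) \<noteq> -\<infinity>" using G1 by auto
  ultimately obtain G where G: "(INF y\<in>B. ereal (g y)) = ereal G" by (cases "(INF y\<in>B. ereal (g y))") auto
  from G1 G have "(r - l * F) / m \<le> G" by simp
  then have "r \<le> l * F + m * G" using m by (simp add: field_simps)
  then show ?thesis using real F G by simp
qed

theorem lemma3p3:
  fixes M P :: "'a measure" and \<rho> :: "('a \<Rightarrow> real) \<Rightarrow> real"
  assumes "monetary_rm M \<rho>" and "prob_space P" and "sets P = sets M"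
  shows "(\<forall>X\<in>Linf P. (AE \<omega> in P. 0 \<le> X \<omega>) \<longrightarrow> rhoP M \<rho> P X \<le> 0) \<and>
    (\<forall>X\<in>Linf P. \<forall>Y\<in>Linf P. (AE \<omega> in P. Y \<omega> \<le> X \<omega>) \<longrightarrow> rhoP M \<rho> P X \<le> rhoP M \<rho> P Y) \<and>
    (\<forall>X\<in>Linf P. \<forall>a::real. rhoP M \<rho> P (\<lambda>\<omega>. X \<omega> + a) = rhoP M \<rho> P X - ereal a) \<and>
    (convex_rm M \<rho> \<longrightarrow>
      (\<forall>X\<in>Linf P. \<forall>Y\<in>Linf P. \<forall>l::real. 0 < l \<and> l < 1 \<longrightarrow>
        rhoP M \<rho> P (\<lambda>\<omega>. l * X \<omega> + (1 - l) * Y \<omega>)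
          \<le> ereal l * rhoP M \<rho> P X + ereal (1 - l) * rhoP M \<rho> P Y))"
proof -
  note mon = assms(1)[unfolded monetary_rm_def]
  have sp: "space P = space M" using assms(3) by (rule sets_eq_imp_space_eq)
  have bm: "borel_measurable P = borel_measurable M" using assms(3) by (rule measurable_cong_sets) simp
  define R where "R X = {X'\<in>bdd_meas M. AE \<omega> in P. X' \<omega> = X \<omega>}" for X :: "'a \<Rightarrow> real"
  have rP: "rhoP M \<rho> P X = (INF X'\<in>R X. ereal (\<rho> X'))" for X unfolding rhoP_def R_def by simp
  define tr where "tr C X = (\<lambda>\<omega>. max (- C) (min C (X \<omega>)))" for C :: real and X :: "'a \<Rightarrow> real"
  have tr_bdd: "tr C X \<in> bdd_meas M" if "X \<in> borel_measurable P" for C X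
  proof -
    have "X \<in> borel_measurable M" using that bm by metis
    then have "tr C X \<in> borel_measurable M" unfolding tr_def by measurable
    moreover have "\<forall>\<omega>\<in>space M. \<bar>tr C X \<omega>\<bar> \<le> \<bar>C\<bar>" unfolding tr_def by auto
    ultimately show ?thesis unfolding bdd_meas_def by blast
  qed
  have tr_ae: "AE \<omega> in P. tr C X \<omega> = X \<omega>" if "AE \<omega> in P. \<bar>X \<omega>\<bar> \<le> C" for C X
    using that by eventually_elim (auto simp: tr_def)
  have Rne: "\<exists>C. tr C X \<in> R X \<and> (AE \<omega> in P. \<bar>X \<omega>\<bar> \<le> C)" if "X \<in> Linf P" for X
  proof -
    from that obtain C where "X \<in> borel_measurable P" "AE \<omega> in P. \<bar>X \<omega>\<bar> \<le> C"
      unfolding Linf_def by blast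
    then show ?thesis using tr_bdd tr_ae unfolding R_def by blast
  qed
  have bddE: "X \<in> borel_measurable M \<and> (\<exists>C. \<forall>\<omega>\<in>space M. \<bar>X \<omega>\<bar> \<le> C)" if "X \<in> bdd_meas M" for X
    using that unfolding bdd_meas_def by blast
  have p1: "rhoP M \<rho> P X \<le> 0" if X: "X \<in> Linf P" and nn: "AE \<omega> in P. 0 \<le> X \<omega>" for X
  proof -
    from Rne[OF X] obtain C where C: "tr C X \<in> R X" "AE \<omega> in P. \<bar>X \<omega>\<bar> \<le> C" by blast
    define Z where "Z = (\<lambda>\<omega>. max 0 (tr C X \<omega>))"
    have "tr C X \<in> bdd_meas M" using C unfolding R_def by blast
    from bddE[OF this] obtain D where "tr C X \<in> borel_measurable M" "\<forall>\<omega>\<in>space M. \<bar>tr C X \<omega>\<bar> \<le> D" by blast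
    then have "Z \<in> borel_measurable M" "\<forall>\<omega>\<in>space M. \<bar>Z \<omega>\<bar> \<le> D" unfolding Z_def by (auto simp: abs_le_iff)
    then have Zb: "Z \<in> bdd_meas M" unfolding bdd_meas_def by blast
    have "AE \<omega> in P. Z \<omega> = X \<omega>" using nn C(2) by eventually_elim (auto simp: Z_def tr_def)
    then have "Z \<in> R X" using Zb unfolding R_def by blast
    then have "rhoP M \<rho> P X \<le> ereal (\<rho> Z)" unfolding rP by (rule INF_lower)
    also have "\<rho> Z \<le> 0" using mon Zb by (auto simp: Z_def)
    finally show ?thesis by (simp add: zero_ereal_def)
  qed
  have p2: "rhoP M \<rho> P X \<le> rhoP M \<rho> P Y" if X: "X \<in> Linf P" and Y: "Y \<in> Linf P"
    and le: "AE \<omega> in P. Y \<omega> \<le> X \<omega>" for X Y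
  proof -
    from Rne[OF X] obtain C where C: "tr C X \<in> R X" "AE \<omega> in P. \<bar>X \<omega>\<bar> \<le> C" by blast
    show ?thesis unfolding rP[of Y]
    proof (rule INF_greatest)
      fix Y' assume Y': "Y' \<in> R Y"
      define Z where "Z = (\<lambda>\<omega>. max (Y' \<omega>) (tr C X \<omega>))"
      have "tr C X \<in> bdd_meas M" using C unfolding R_def by blast
      from bddE[OF this] obtain D where D: "tr C X \<in> borel_measurable M" "\<forall>\<omega>\<in>space M. \<bar>tr C X \<omega>\<bar> \<le> D" by blast
      have "Y' \<in> bdd_meas M" using Y' unfolding R_def by blast
      from bddE[OF this] obtain E where E: "Y' \<in> borel_measurable M" "\<forall>\<omega>\<in>space M. \<bar>Y' \<omega>\<bar> \<le> E" by blast
      have "Z \<in> borel_measurable M" unfolding Z_def using D E by measurable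
      moreover have "\<forall>\<omega>\<in>space M. \<bar>Z \<omega>\<bar> \<le> max D E" using D E unfolding Z_def
        by (auto simp: abs_le_iff)
      ultimately have Zb: "Z \<in> bdd_meas M" unfolding bdd_meas_def by blast
      have "AE \<omega> in P. Y' \<omega> = Y \<omega>" using Y' unfolding R_def by blast
      then have "AE \<omega> in P. Z \<omega> = X \<omega>" using le C(2)
        by eventually_elim (auto simp: Z_def tr_def)
      then have "Z \<in> R X" using Zb unfolding R_def by blast
      then have "rhoP M \<rho> P X \<le> ereal (\<rho> Z)" unfolding rP by (rule INF_lower)
      also have "\<rho> Z \<le> \<rho> Y'" using mon Zb \<open>Y' \<in> bdd_meas M\<close> by (auto simp: Z_def)
      finally show "rhoP M \<rho> P X \<le> ereal (\<rho> Y')" by simp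
    qed
  qed
  have shift_bdd: "(\<lambda>\<omega>. X \<omega> + a) \<in> bdd_meas M" if "X \<in> bdd_meas M" for X a
  proof -
    from bddE[OF that] obtain C where "X \<in> borel_measurable M" "\<forall>\<omega>\<in>space M. \<bar>X \<omega>\<bar> \<le> C" by blast
    then have "(\<lambda>\<omega>. X \<omega> + a) \<in> borel_measurable M" "\<forall>\<omega>\<in>space M. \<bar>X \<omega> + a\<bar> \<le> C + \<bar>a\<bar>"
      by (auto simp: abs_le_iff)
    then show ?thesis unfolding bdd_meas_def by blast
  qed
  have shiftR: "(\<lambda>\<omega>. X' \<omega> + a) \<in> R (\<lambda>\<omega>. X \<omega> + a)" if "X' \<in> R X" for X X' a
    using that shift_bdd unfolding R_def by (auto elim: AE_mp)
  have p3: "rhoP M \<rho> P (\<lambda>\<omega>. X \<omega> + a) = rhoP M \<rho> P X - ereal a" if X: "X \<in> Linf P" for X a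
  proof (rule antisym)
    have "rhoP M \<rho> P (\<lambda>\<omega>. X \<omega> + a) + ereal a \<le> rhoP M \<rho> P X"
      unfolding rP[of X]
    proof (rule INF_greatest)
      fix X' assume X': "X' \<in> R X"
      have "rhoP M \<rho> P (\<lambda>\<omega>. X \<omega> + a) \<le> ereal (\<rho> (\<lambda>\<omega>. X' \<omega> + a))"
        unfolding rP by (rule INF_lower) (rule shiftR[OF X'])
      also have "\<rho> (\<lambda>\<omega>. X' \<omega> + a) = \<rho> X' - a" using mon X' unfolding R_def by blast
      finally show "rhoP M \<rho> P (\<lambda>\<omega>. X \<omega> + a) + ereal a \<le> ereal (\<rho> X')"
        by (cases "rhoP M \<rho> P (\<lambda>\<omega>. X \<omega> + a)") auto
    qed
    then show "rhoP M \<rho> P (\<lambda>\<omega>. X \<omega> + a) \<le> rhoP M \<rho> P X - ereal a"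
      by (cases "rhoP M \<rho> P (\<lambda>\<omega>. X \<omega> + a)"; cases "rhoP M \<rho> P X") auto
  next
    have "rhoP M \<rho> P X - ereal a \<le> rhoP M \<rho> P (\<lambda>\<omega>. X \<omega> + a)"
      unfolding rP[of "\<lambda>\<omega>. X \<omega> + a"]
    proof (rule INF_greatest)
      fix Z assume Z: "Z \<in> R (\<lambda>\<omega>. X \<omega> + a)"
      have Z': "(\<lambda>\<omega>. Z \<omega> + (- a)) \<in> R X" using shiftR[OF Z, of "-a"] by simp
      have h1: "rhoP M \<rho> P X \<le> ereal (\<rho> (\<lambda>\<omega>. Z \<omega> + (- a)))"
        unfolding rP by (rule INF_lower) (rule Z')
      have "Z \<in> bdd_meas M" using Z unfolding R_def by blast
      then have h2: "\<rho> (\<lambda>\<omega>. Z \<omega> + (- a)) = \<rho> Z - (- a)" using mon by blast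
      from h1 h2 have "rhoP M \<rho> P X \<le> ereal (\<rho> Z + a)" by simp
      then show "rhoP M \<rho> P X - ereal a \<le> ereal (\<rho> Z)"
        by (cases "rhoP M \<rho> P X") auto
    qed
    then show "rhoP M \<rho> P X - ereal a \<le> rhoP M \<rho> P (\<lambda>\<omega>. X \<omega> + a)" .
  qed
  have p4: "rhoP M \<rho> P (\<lambda>\<omega>. l * X \<omega> + (1 - l) * Y \<omega>)
          \<le> ereal l * rhoP M \<rho> P X + ereal (1 - l) * rhoP M \<rho> P Y"
    if cv: "convex_rm M \<rho>" and X: "X \<in> Linf P" and Y: "Y \<in> Linf P" and l: "0 < l" "l < 1" for X Y l
  proof -
    have ne: "R X \<noteq> {}" "R Y \<noteq> {}" using Rne[OF X] Rne[OF Y] by blast+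
    show ?thesis unfolding rP[of X] rP[of Y]
    proof (rule conv_aux[OF ne l(1)])
      show "0 < 1 - l" using l by simp
      fix X' Y' assume X': "X' \<in> R X" and Y': "Y' \<in> R Y"
      have Xb: "X' \<in> bdd_meas M" and Yb: "Y' \<in> bdd_meas M" using X' Y' unfolding R_def by blast+
      define Z where "Z = (\<lambda>\<omega>. l * X' \<omega> + (1 - l) * Y' \<omega>)"
      from bddE[OF Xb] obtain D where D: "X' \<in> borel_measurable M" "\<forall>\<omega>\<in>space M. \<bar>X' \<omega>\<bar> \<le> D" by blast
      from bddE[OF Yb] obtain E where E: "Y' \<in> borel_measurable M" "\<forall>\<omega>\<in>space M. \<bar>Y' \<omega>\<bar> \<le> E" by blast
      have "Z \<in> borel_measurable M" unfolding Z_def using D E by measurable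
      moreover have "\<forall>\<omega>\<in>space M. \<bar>Z \<omega>\<bar> \<le> l * D + (1 - l) * E"
      proof
        fix \<omega> assume w: "\<omega> \<in> space M"
        have "\<bar>Z \<omega>\<bar> \<le> \<bar>l * X' \<omega>\<bar> + \<bar>(1 - l) * Y' \<omega>\<bar>" unfolding Z_def by (rule abs_triangle_ineq)
        also have "\<dots> = l * \<bar>X' \<omega>\<bar> + (1 - l) * \<bar>Y' \<omega>\<bar>" using l by (simp add: abs_mult)
        also have "\<dots> \<le> l * D + (1 - l) * E" using D(2) E(2) w l
          by (intro add_mono mult_left_mono) auto
        finally show "\<bar>Z \<omega>\<bar> \<le> l * D + (1 - l) * E" .
      qed
      ultimately have Zb: "Z \<in> bdd_meas M" unfolding bdd_meas_def by blast
      have "AE \<omega> in P. X' \<omega> = X \<omega>" "AE \<omega> in P. Y' \<omega> = Y \<omega>" using X' Y' unfolding R_def by blast+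
      then have "AE \<omega> in P. Z \<omega> = l * X \<omega> + (1 - l) * Y \<omega>"
        by eventually_elim (auto simp: Z_def)
      then have "Z \<in> R (\<lambda>\<omega>. l * X \<omega> + (1 - l) * Y \<omega>)" using Zb unfolding R_def by blast
      then have "rhoP M \<rho> P (\<lambda>\<omega>. l * X \<omega> + (1 - l) * Y \<omega>) \<le> ereal (\<rho> Z)" unfolding rP by (rule INF_lower)
      also have "\<rho> Z \<le> l * \<rho> X' + (1 - l) * \<rho> Y'" using cv Xb Yb l unfolding convex_rm_def Z_def by blast
      finally show "rhoP M \<rho> P (\<lambda>\<omega>. l * X \<omega> + (1 - l) * Y \<omega>) \<le> ereal (l * \<rho> X' + (1 - l) * \<rho> Y')" by simp
    qed
  qed
  show ?thesis using p1 p2 p3 p4 by blast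
qed

end
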